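(* Let $x$ be fixed observed data and $p(x,z)$, $z\in\mathbb{R}^d$, a positive joint density differentiable in $z$. Let $\alpha\in[0,1)$, $K\ge1$, $n\in\{1,\dots,K\}$, let $q$ be a probability density on $\mathbb{R}^d$ with finite second moment and set $w(z):=p(x,z)/q(z)$. For a probability density $q_n$ on $\mathbb{R}^d$ with finite second moment define $$\mathcal{G}_n(q_n):=\frac{1}{1-\alpha}\mathbb{E}_{z_n\sim q_n}\Big[\mathbb{E}_{\{z_i\}_{i\neq n}\overset{i.i.d.}{\sim} q}\log\Big(\frac1K\frac{p(x,z_n)^{1-\alpha}}{q_n(z_n)^{1-\alpha}}+\frac1K\sum_{i\neq n}\frac{p(x,z_i)^{1-\alpha}}{q(z_i)^{1-\alpha}}\Big)\Big].$$ Suppose standard regularity conditions hold that allow interchanging derivatives with expectations/integrals. Then the Wasserstein gradient of $\mathcal{G}_n$ at $q_n=q$ is $$\nabla^W[\mathcal{G}_n(q)](z_n)=\mathbb{E}_{\{z_i\}_{i\neq n}\overset{i.i.d.}{\sim} q}\left[\left(\alpha\frac{w(z_n)^{1-\alpha}}{\sum_{i=1}^K w(z_i)^{1-\alpha}}+(1-\alpha)\left(\frac{w(z_n)^{1-\alpha}}{\sum_{i=1}^K w(z_i)^{1-\alpha}}\right)^2\right)\nabla_{z_n}\log w(z_n)\right].$$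
   Context: For a functional $\mathcal{F}$ on the space $\mathcal{P}_2(\mathbb{R}^d)$ of probability measures with finite second moment, the first variation at $\mu$ is a function $\frac{\delta\mathcal{F}(\mu)}{\delta\mu}$ such that $\lim_{\epsilon\to0^+}\frac{\mathcal{F}(\mu+\epsilon\nu)-\mathcal{F}(\mu)}{\epsilon}=\int\frac{\delta\mathcal{F}(\mu)}{\delta\mu}\,d\nu$ for all signed measures $\nu$ with $\mu+\epsilon\nu\in\mathcal{P}_2(\mathbb{R}^d)$ for small $\epsilon>0$; the Wasserstein gradient is $\nabla_x\frac{\delta\mathcal{F}(\mu)}{\delta\mu}(x)$. In the displayed formula $z_n$ is the evaluation point and the $z_i$, $i\neq n$, are integrated out. *)

theory Defs
  imports "HOL-Analysis.Analysis"
begin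

text \<open>Probability densities on a Euclidean space with finite second moment
  (the density-level version of P_2(R^d)).\<close>
definition P2_density :: "('a::euclidean_space \<Rightarrow> real) \<Rightarrow> bool" where
  "P2_density f \<longleftrightarrow> f \<in> borel_measurable lborel \<and> (\<forall>z. 0 \<le> f z) \<and>
     integrable lborel f \<and> (\<integral>z. f z \<partial>lborel) = 1 \<and>
     integrable lborel (\<lambda>z. (norm z)^2 * f z)"

text \<open>First variation: for every perturbation nu (a signed measure, given by its density)
  such that mu + eps nu is in P_2 for all small eps > 0, the right derivative of
  eps |-> F(mu + eps nu) at 0 equals the integral of Phi against nu.\<close>
definition first_variation ::
  "(('a::euclidean_space \<Rightarrow> real) \<Rightarrow> real) \<Rightarrow> ('a \<Rightarrow> real) \<Rightarrow> ('a \<Rightarrow> real) \<Rightarrow> bool" where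
  "first_variation F \<mu> \<Phi> \<longleftrightarrow>
     (\<forall>\<nu>. (\<forall>\<^sub>F \<epsilon> in at_right 0. P2_density (\<lambda>z. \<mu> z + \<epsilon> * \<nu> z)) \<longrightarrow>
        ((\<lambda>\<epsilon>. (F (\<lambda>z. \<mu> z + \<epsilon> * \<nu> z) - F \<mu>) / \<epsilon>) \<longlongrightarrow> (\<integral>z. \<Phi> z * \<nu> z \<partial>lborel)) (at_right 0))"

definition grad :: "('a::euclidean_space \<Rightarrow> real) \<Rightarrow> 'a \<Rightarrow> 'a" where
  "grad f z = (THE D. GDERIV f z :> D)"

definition wasserstein_gradient ::
  "(('a::euclidean_space \<Rightarrow> real) \<Rightarrow> real) \<Rightarrow> ('a \<Rightarrow> real) \<Rightarrow> ('a \<Rightarrow> 'a) \<Rightarrow> bool" where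
  "wasserstein_gradient F \<mu> g \<longleftrightarrow>
     (\<exists>\<Phi>. first_variation F \<mu> \<Phi> \<and> (\<forall>z. GDERIV \<Phi> z :> g z))"

definition iidQ :: "nat \<Rightarrow> nat \<Rightarrow> ('a::euclidean_space \<Rightarrow> real) \<Rightarrow> (nat \<Rightarrow> 'a) measure" where
  "iidQ K n q = PiM ({1..K} - {n}) (\<lambda>_. density lborel (\<lambda>z. ennreal (q z)))"

definition Sterm :: "('x \<Rightarrow> 'a \<Rightarrow> real) \<Rightarrow> 'x \<Rightarrow> ('a \<Rightarrow> real) \<Rightarrow> real \<Rightarrow> nat \<Rightarrow> nat \<Rightarrow> (nat \<Rightarrow> 'a) \<Rightarrow> real" where
  "Sterm p x q \<alpha> K n zs =
     (1 / real K) * (\<Sum>i\<in>{1..K} - {n}. p x (zs i) powr (1 - \<alpha>) / q (zs i) powr (1 - \<alpha>))"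

definition Gn :: "('x \<Rightarrow> 'a::euclidean_space \<Rightarrow> real) \<Rightarrow> 'x \<Rightarrow> ('a \<Rightarrow> real) \<Rightarrow> real \<Rightarrow> nat \<Rightarrow> nat
                   \<Rightarrow> ('a \<Rightarrow> real) \<Rightarrow> real" where
  "Gn p x q \<alpha> K n qn =
     1 / (1 - \<alpha>) *
       (\<integral>zn. (\<integral>zs. ln ((1 / real K) * (p x zn powr (1 - \<alpha>) / qn zn powr (1 - \<alpha>))
                          + Sterm p x q \<alpha> K n zs) \<partial>iidQ K n q)
        \<partial>density lborel (\<lambda>z. ennreal (qn z)))"

end

theory Submission
  imports Defs
begin

lemma alg1:
  fixes D c e S b :: real
  assumes "D = c*e+S" "D \<noteq> 0"
  shows "e*b*c/D - (e*b*(b*c)*D - b*c*e*(e*b*c))/(D*D) = b*((1-b)*(c*e)/D + b*(c*e/D)^2)"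
proof -
  have S: "S = D - c*e" using assms by simp
  show ?thesis using assms(2) unfolding S by (simp add: field_simps power2_eq_square)
qed
lemma alg2:
  fixes Q X Y t c S b :: real
  assumes "Y * t = X" "X > 0" "c*(Q/X)+S \<noteq> 0"
  shows "c * Q * (b * Y) * t / ((c * Q / X + S) * (X * X)) = b*c*(Q/X)/(c*(Q/X)+S)"
proof -
  have "c * Q * (b * Y) * t = c*Q*b*X" using assms(1) by (simp add: algebra_simps)
  then have "c * Q * (b * Y) * t / ((c * Q / X + S) * (X * X)) = c*Q*b*X / ((c * Q / X + S) * (X * X))" by (simp only:)
  also have "... = b*c*(Q/X)/(c*(Q/X)+S)"
  proof -
    have gen: "\<And>A. A \<noteq> 0 \<Longrightarrow> c*Q*b*X / (A * (X * X)) = b*c*(Q/X)/A" using assms(2) by (simp add: field_simps)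
    show ?thesis using gen[of "c*(Q/X)+S"] assms(3) by simp
  qed
  finally show ?thesis .
qed
lemma dh:
  fixes P t S b c :: real
  assumes "0<P" "0<t" "0\<le>S" "0<c"
  shows "((\<lambda>t. t * ln (c * (P powr b / t powr b) + S)) has_real_derivative
     (ln (c*(P/t) powr b + S) - b*c*(P/t) powr b/(c*(P/t) powr b + S))) (at t)"
proof -
  have pos: "0 < c * (P powr b / t powr b) + S" using assms by (simp add: add_pos_nonneg)
  have tb: "t powr (b - 1) * t = t powr b" using assms by (simp add: powr_diff)
  have tp: "t powr b > 0" using assms by simp
  have eq: "(P/t) powr b = P powr b / t powr b" using assms by (simp add: powr_divide)
  show ?thesis
    using assms pos
    apply (auto intro!: derivative_eq_intros)
    using alg2[OF tb tp, of c "P powr b" S b] pos eq by simp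
qed

lemma dphi:
  fixes S b c s :: real
  assumes "0\<le>S" "0<c"
  shows "((\<lambda>s. ln (c * exp (b * s) + S) - b * c * exp (b * s) / (c * exp (b * s) + S)) has_real_derivative
     (b * ((1 - b) * (c * exp (b * s) / (c * exp (b * s) + S)) + b * (c * exp (b * s) / (c * exp (b * s) + S))^2))) (at s)"
proof -
  have pos: "0 < c * exp (b * s) + S" using assms by (simp add: add_pos_nonneg)
  show ?thesis
    using assms pos
    apply (auto intro!: derivative_eq_intros)
    using alg1[of "c * exp (b * s) + S" c "exp (b * s)" S b] pos by simp
qed

lemma gderiv_exists:
  fixes f :: "'a::euclidean_space \<Rightarrow> real"
  assumes "f differentiable (at z)"
  shows "\<exists>D. GDERIV f z :> D"
proof -
  obtain f' where d: "(f has_derivative f') (at z)" using assms differentiable_def by blast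
  then have lin: "linear f'" using has_derivative_linear by blast
  have "\<forall>h. f' h = h \<bullet> adjoint f' 1" using adjoint_works[OF lin, of _ 1] by simp
  then have "f' = (\<lambda>h. h \<bullet> adjoint f' 1)" by auto
  show ?thesis unfolding gderiv_def
    proof (intro exI)
      show "(f has_derivative (\<lambda>h. h \<bullet> adjoint f' 1)) (at z)" using d \<open>f' = _\<close> by simp
    qed
qed

lemma gderiv_unique:
  fixes f :: "'a::euclidean_space \<Rightarrow> real"
  assumes "GDERIV f z :> D" "GDERIV f z :> D'"
  shows "D = D'"
proof -
  have "(\<lambda>h. h \<bullet> D) = (\<lambda>h. h \<bullet> D')"
    using has_derivative_unique assms unfolding gderiv_def by blast
  then have "\<forall>h. h \<bullet> D = h \<bullet> D'" by metis
  then show ?thesis using vector_eq_ldot by blast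
qed

lemma grad_eq:
  fixes f :: "'a::euclidean_space \<Rightarrow> real"
  assumes "GDERIV f z :> D"
  shows "grad f z = D"
  unfolding grad_def using assms gderiv_unique by blast

lemma gderiv_cmult:
  fixes f :: "'a::euclidean_space \<Rightarrow> real"
  assumes "GDERIV f z :> D"
  shows "GDERIV (\<lambda>y. c * f y) z :> c *\<^sub>R D"
  using GDERIV_mult[OF GDERIV_const assms, of c] by simp

theorem proposition3:
  fixes p :: "'x \<Rightarrow> 'a::euclidean_space \<Rightarrow> real" and x :: 'x
    and q :: "'a \<Rightarrow> real" and \<alpha> :: real and K n :: nat
  assumes p_pos: "\<forall>z. 0 < p x z"
    and p_diff: "\<forall>z. (p x) differentiable (at z)"
    and alpha: "0 \<le> \<alpha>" "\<alpha> < 1"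
    and K: "1 \<le> K" and n: "n \<in> {1..K}"
    and q_P2: "P2_density q"
    and q_pos: "\<forall>z. 0 < q z"
    and q_diff: "\<forall>z. q differentiable (at z)"
    \<comment> \<open>regularity: interchange of the derivative in eps with the integrals\<close>
    and interchange_eps:
      "\<forall>\<nu>. (\<forall>\<^sub>F \<epsilon> in at_right 0. P2_density (\<lambda>z. q z + \<epsilon> * \<nu> z)) \<longrightarrow>
         ((\<lambda>\<epsilon>. (Gn p x q \<alpha> K n (\<lambda>z. q z + \<epsilon> * \<nu> z) - Gn p x q \<alpha> K n q) / \<epsilon>)
            \<longlongrightarrow> 1 / (1 - \<alpha>) *
               (\<integral>z. (\<integral>zs. deriv (\<lambda>\<epsilon>. (q z + \<epsilon> * \<nu> z) *
                     ln ((1 / real K) * (p x z powr (1 - \<alpha>) / (q z + \<epsilon> * \<nu> z) powr (1 - \<alpha>))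
                         + Sterm p x q \<alpha> K n zs)) 0 \<partial>iidQ K n q) \<partial>lborel)) (at_right 0)"
    \<comment> \<open>regularity: interchange of the gradient in z_n with the expectation over z_i, i \<noteq> n\<close>
    and interchange_grad:
      "\<forall>z g. (\<forall>zs\<in>space (iidQ K n q).
               GDERIV (\<lambda>y. deriv (\<lambda>t. t * ln ((1 / real K) * (p x y powr (1 - \<alpha>) / t powr (1 - \<alpha>))
                                         + Sterm p x q \<alpha> K n zs)) (q y)) z :> g zs) \<longrightarrow>
             GDERIV (\<lambda>y. \<integral>zs. deriv (\<lambda>t. t * ln ((1 / real K) * (p x y powr (1 - \<alpha>) / t powr (1 - \<alpha>))
                                         + Sterm p x q \<alpha> K n zs)) (q y) \<partial>iidQ K n q) z
               :> (\<integral>zs. g zs \<partial>iidQ K n q)"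
  shows "wasserstein_gradient (Gn p x q \<alpha> K n) q
           (\<lambda>zn. \<integral>zs.
              (let w = (\<lambda>y. p x y / q y);
                   r = w zn powr (1 - \<alpha>) / (\<Sum>i\<in>{1..K}. w ((zs(n := zn)) i) powr (1 - \<alpha>))
               in (\<alpha> * r + (1 - \<alpha>) * r^2) *\<^sub>R grad (\<lambda>y. ln (w y)) zn) \<partial>iidQ K n q)"
proof -
  define b where "b = 1 - \<alpha>"
  define c where "c = 1 / real K"
  have b: "0 < b" using alpha b_def by simp
  have c: "0 < c" using K c_def by simp
  have Snn: "0 \<le> Sterm p x q \<alpha> K n zs" for zs
    unfolding Sterm_def by (auto intro!: divide_nonneg_nonneg sum_nonneg)
  have dH: "((\<lambda>t. t * ln ((1 / real K) * (p x y powr (1 - \<alpha>) / t powr (1 - \<alpha>)) + Sterm p x q \<alpha> K n zs))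
      has_real_derivative
      (ln (c*(p x y / q y) powr b + Sterm p x q \<alpha> K n zs)
        - b*c*(p x y / q y) powr b/(c*(p x y / q y) powr b + Sterm p x q \<alpha> K n zs))) (at (q y))" for y zs
    using dh[of "p x y" "q y" "Sterm p x q \<alpha> K n zs" c b] p_pos q_pos Snn c
    unfolding b_def c_def by simp
  define \<Phi> where "\<Phi> = (\<lambda>z. 1 / (1 - \<alpha>) * (\<integral>zs. deriv (\<lambda>t. t * ln ((1 / real K) * (p x z powr (1 - \<alpha>) / t powr (1 - \<alpha>))
                                         + Sterm p x q \<alpha> K n zs)) (q z) \<partial>iidQ K n q))"
  have fv: "first_variation (Gn p x q \<alpha> K n) q \<Phi>"
    unfolding first_variation_def
  proof (intro allI impI)
    fix \<nu> :: "'a \<Rightarrow> real"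
    assume ev: "\<forall>\<^sub>F \<epsilon> in at_right 0. P2_density (\<lambda>z. q z + \<epsilon> * \<nu> z)"
    have pt: "deriv (\<lambda>\<epsilon>. (q z + \<epsilon> * \<nu> z) *
                     ln ((1 / real K) * (p x z powr (1 - \<alpha>) / (q z + \<epsilon> * \<nu> z) powr (1 - \<alpha>))
                         + Sterm p x q \<alpha> K n zs)) 0
        = deriv (\<lambda>t. t * ln ((1 / real K) * (p x z powr (1 - \<alpha>) / t powr (1 - \<alpha>))
                                         + Sterm p x q \<alpha> K n zs)) (q z) * \<nu> z" for z zs
    proof -
      have dg: "((\<lambda>\<epsilon>. q z + \<epsilon> * \<nu> z) has_real_derivative \<nu> z) (at 0)"
        by (auto intro!: derivative_eq_intros)
      have dh0: "((\<lambda>t. t * ln ((1 / real K) * (p x z powr (1 - \<alpha>) / t powr (1 - \<alpha>)) + Sterm p x q \<alpha> K n zs))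
      has_real_derivative
      (ln (c*(p x z / q z) powr b + Sterm p x q \<alpha> K n zs)
        - b*c*(p x z / q z) powr b/(c*(p x z / q z) powr b + Sterm p x q \<alpha> K n zs))) (at (q z + 0 * \<nu> z))"
        using dH[of z zs] by simp
      show ?thesis
        using DERIV_imp_deriv[OF DERIV_chain2[OF dh0 dg]] DERIV_imp_deriv[OF dH[of z zs]] by simp
    qed
    have eq: "1 / (1 - \<alpha>) *
               (\<integral>z. (\<integral>zs. deriv (\<lambda>\<epsilon>. (q z + \<epsilon> * \<nu> z) *
                     ln ((1 / real K) * (p x z powr (1 - \<alpha>) / (q z + \<epsilon> * \<nu> z) powr (1 - \<alpha>))
                         + Sterm p x q \<alpha> K n zs)) 0 \<partial>iidQ K n q) \<partial>lborel)
        = (\<integral>z. \<Phi> z * \<nu> z \<partial>lborel)"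
      unfolding pt \<Phi>_def integral_mult_left_zero
      by (simp add: mult.assoc)
    show "((\<lambda>\<epsilon>. (Gn p x q \<alpha> K n (\<lambda>z. q z + \<epsilon> * \<nu> z) - Gn p x q \<alpha> K n q) / \<epsilon>) \<longlongrightarrow> (\<integral>z. \<Phi> z * \<nu> z \<partial>lborel)) (at_right 0)"
      using interchange_eps ev unfolding eq[symmetric] by blast
  qed
  have gLex: "\<exists>gL. GDERIV (\<lambda>y. ln (p x y / q y)) z :> gL" for z
  proof -
    obtain Dp where Dp: "GDERIV (p x) z :> Dp" using gderiv_exists p_diff by blast
    obtain Dq where Dq: "GDERIV q z :> Dq" using gderiv_exists q_diff by blast
    have qz: "q z \<noteq> 0" using q_pos by (metis less_irrefl)
    have m: "GDERIV (\<lambda>y. p x y * inverse (q y)) z :> p x z *\<^sub>R (- (inverse (q z))\<^sup>2 *\<^sub>R Dq) + inverse (q z) *\<^sub>R Dp"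
      using GDERIV_mult[OF Dp GDERIV_inverse[OF Dq qz]] by simp
    have pz: "0 < p x z * inverse (q z)" using p_pos q_pos by simp
    have "GDERIV (\<lambda>y. ln (p x y * inverse (q y))) z :> inverse (p x z * inverse (q z)) *\<^sub>R (p x z *\<^sub>R (- (inverse (q z))\<^sup>2 *\<^sub>R Dq) + inverse (q z) *\<^sub>R Dp)"
      by (rule GDERIV_DERIV_compose[OF m DERIV_ln[OF pz]])
    then show ?thesis by (auto simp: divide_inverse)
  qed
  have wpos: "0 < p x y / q y" for y using p_pos q_pos by simp
  have wpow: "(p x y / q y) powr b = exp (b * ln (p x y / q y))" for y
    using wpos[of y] p_pos q_pos by (simp add: powr_def less_imp_neq[symmetric])
  show ?thesis unfolding wasserstein_gradient_def
  proof (intro exI conjI allI)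
    show "first_variation (Gn p x q \<alpha> K n) q \<Phi>" by (rule fv)
    fix z
    obtain gL where gL: "GDERIV (\<lambda>y. ln (p x y / q y)) z :> gL" using gLex by blast
    define L where "L = (\<lambda>y. ln (p x y / q y))"
    define S where "S = (\<lambda>zs. Sterm p x q \<alpha> K n zs)"
    define e where "e = exp (b * L z)"
    define ph where "ph = (\<lambda>zs. b * ((1 - b) * (c * e / (c * e + S zs)) + b * (c * e / (c * e + S zs))\<^sup>2))"
    have each: "\<forall>zs\<in>space (iidQ K n q).
               GDERIV (\<lambda>y. deriv (\<lambda>t. t * ln ((1 / real K) * (p x y powr (1 - \<alpha>) / t powr (1 - \<alpha>))
                                         + Sterm p x q \<alpha> K n zs)) (q y)) z :> ph zs *\<^sub>R gL"
    proof
      fix zs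
      have fe: "(\<lambda>y. deriv (\<lambda>t. t * ln ((1 / real K) * (p x y powr (1 - \<alpha>) / t powr (1 - \<alpha>))
                                         + Sterm p x q \<alpha> K n zs)) (q y))
         = (\<lambda>y. ln (c * exp (b * L y) + S zs) - b * c * exp (b * L y) / (c * exp (b * L y) + S zs))"
        using DERIV_imp_deriv[OF dH] wpow unfolding L_def S_def by simp
      show "GDERIV (\<lambda>y. deriv (\<lambda>t. t * ln ((1 / real K) * (p x y powr (1 - \<alpha>) / t powr (1 - \<alpha>))
                                         + Sterm p x q \<alpha> K n zs)) (q y)) z :> ph zs *\<^sub>R gL"
        unfolding fe ph_def e_def
        using GDERIV_DERIV_compose[OF gL[folded L_def] dphi[OF Snn[of zs] c, of b "L z", folded S_def]] by simp
    qed
    have G1: "GDERIV (\<lambda>y. \<integral>zs. deriv (\<lambda>t. t * ln ((1 / real K) * (p x y powr (1 - \<alpha>) / t powr (1 - \<alpha>))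
                                         + Sterm p x q \<alpha> K n zs)) (q y) \<partial>iidQ K n q) z
               :> (\<integral>zs. ph zs *\<^sub>R gL \<partial>iidQ K n q)"
      using interchange_grad[rule_format, of z "\<lambda>zs. ph zs *\<^sub>R gL"] each by blast
    have G2: "GDERIV \<Phi> z :> (1 / (1 - \<alpha>)) *\<^sub>R (\<integral>zs. ph zs *\<^sub>R gL \<partial>iidQ K n q)"
      unfolding \<Phi>_def by (rule gderiv_cmult[OF G1])
    have grd: "grad (\<lambda>y. ln (p x y / q y)) z = gL" by (rule grad_eq[OF gL])
    have pw: "(1 / (1 - \<alpha>)) *\<^sub>R (ph zs *\<^sub>R gL) =
       (let w = (\<lambda>y. p x y / q y);
                   r = w z powr (1 - \<alpha>) / (\<Sum>i\<in>{1..K}. w ((zs(n := z)) i) powr (1 - \<alpha>))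
               in (\<alpha> * r + (1 - \<alpha>) * r^2) *\<^sub>R grad (\<lambda>y. ln (w y)) z)" for zs
    proof -
      define T where "T = (\<Sum>i\<in>{1..K} - {n}. (p x (zs i) / q (zs i)) powr b)"
      have T0: "0 \<le> T" unfolding T_def by (auto intro!: sum_nonneg)
      have e0: "0 < e" unfolding e_def by simp
      have ew: "(p x z / q z) powr (1 - \<alpha>) = e" unfolding e_def L_def using wpow b_def by simp
      have ST: "S zs = c * T" unfolding S_def Sterm_def T_def c_def b_def
        by (simp add: powr_divide)
      have sum: "(\<Sum>i\<in>{1..K}. (p x ((zs(n := z)) i) / q ((zs(n := z)) i)) powr (1 - \<alpha>)) = e + T"
      proof -
        have "(\<Sum>i\<in>{1..K}. (p x ((zs(n := z)) i) / q ((zs(n := z)) i)) powr (1 - \<alpha>))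
           = (p x ((zs(n := z)) n) / q ((zs(n := z)) n)) powr (1 - \<alpha>) + (\<Sum>i\<in>{1..K} - {n}. (p x ((zs(n := z)) i) / q ((zs(n := z)) i)) powr (1 - \<alpha>))"
          by (rule sum.remove[OF finite_atLeastAtMost n])
        also have "(\<Sum>i\<in>{1..K} - {n}. (p x ((zs(n := z)) i) / q ((zs(n := z)) i)) powr (1 - \<alpha>)) = T"
          unfolding T_def b_def by (rule sum.cong) auto
        finally show ?thesis using ew by simp
      qed
      have r: "c * e / (c * e + S zs) = e / (e + T)"
      proof -
        have "c * e / (c * e + c * T) = (c * e) / (c * (e + T))" by (simp add: algebra_simps)
        also have "... = e / (e + T)" using c by simp
        finally show ?thesis unfolding ST .
      qed
      show ?thesis
      proof -
        have sc: "(1 / (1 - \<alpha>)) * ((1 - \<alpha>) * ((1 - (1 - \<alpha>)) * rr + (1 - \<alpha>) * rr\<^sup>2)) = \<alpha> * rr + (1 - \<alpha>) * rr\<^sup>2" for rr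
          using alpha by simp
        show ?thesis unfolding Let_def grd sum ew ph_def r scaleR_scaleR b_def using sc[of "e / (e + T)"] by simp
      qed
    qed
    have "(1 / (1 - \<alpha>)) *\<^sub>R (\<integral>zs. ph zs *\<^sub>R gL \<partial>iidQ K n q) = (\<integral>zs.
              (let w = (\<lambda>y. p x y / q y);
                   r = w z powr (1 - \<alpha>) / (\<Sum>i\<in>{1..K}. w ((zs(n := z)) i) powr (1 - \<alpha>))
               in (\<alpha> * r + (1 - \<alpha>) * r^2) *\<^sub>R grad (\<lambda>y. ln (w y)) z) \<partial>iidQ K n q)"
      unfolding integral_scaleR_right[symmetric] pw ..
    then show "GDERIV \<Phi> z :> (\<integral>zs.
              (let w = (\<lambda>y. p x y / q y);
                   r = w z powr (1 - \<alpha>) / (\<Sum>i\<in>{1..K}. w ((zs(n := z)) i) powr (1 - \<alpha>))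
               in (\<alpha> * r + (1 - \<alpha>) * r^2) *\<^sub>R grad (\<lambda>y. ln (w y)) z) \<partial>iidQ K n q)"
      using G2 by simp
  qed
qed

end
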